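(* Let $\mathcal{F}$ be the family of $1$-Lipschitz functions from $[0,1]$ to $[-1,1]$. There is a universal constant $C$ such that $\mathfrak{R}_T(\mathcal{F}) \le C\sqrt{T}$ for every positive integer $T$.
   Context: The sequential Rademacher complexity of a family $\mathcal{F}$ of functions on $[0,1]$ is $\mathfrak{R}_T(\mathcal{F}) = \sup_{z_1,\ldots,z_T} \mathbb{E}_{\sigma \sim \{\pm 1\}^T}\left[\sup_{f \in \mathcal{F}} \sum_{t=1}^T \sigma_t f(z_t(\sigma_1,\ldots,\sigma_{t-1}))\right]$, where $\sigma$ is uniform on $\{\pm1\}^T$ and the outer supremum is over all tuples $(z_1,\ldots,z_T)$ with $z_t : \{\pm1\}^{t-1} \to [0,1]$. *)

theory Defs
  imports "HOL-Analysis.Analysis"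
begin

text \<open>Sign sequences in {-1,1}^T, represented as lists of length T
  (entry t, 0-indexed, is sigma_(t+1)).\<close>
definition sign_seqs :: "nat \<Rightarrow> real list set" where
  "sign_seqs T = {s. length s = T \<and> set s \<subseteq> {-1, 1}}"

text \<open>Trees: z t p is z_(t+1) evaluated at the prefix p = (sigma_1,...,sigma_t);
  all values lie in [0,1].\<close>
definition unit_trees :: "(nat \<Rightarrow> real list \<Rightarrow> real) set" where
  "unit_trees = {z. \<forall>t p. z t p \<in> {0..1}}"

definition seq_rademacher :: "(real \<Rightarrow> real) set \<Rightarrow> nat \<Rightarrow> real" where
  "seq_rademacher F T =
     (SUP z \<in> unit_trees.
        (\<Sum>\<sigma>\<in>sign_seqs T. (SUP f\<in>F. \<Sum>t<T. \<sigma> ! t * f (z t (take t \<sigma>)))) / 2 ^ T)"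

text \<open>1-Lipschitz functions from [0,1] to [-1,1] (values off [0,1] are irrelevant).\<close>
definition lip1_family :: "(real \<Rightarrow> real) set" where
  "lip1_family = {f. (\<forall>x\<in>{0..1}. \<forall>y\<in>{0..1}. \<bar>f x - f y\<bar> \<le> \<bar>x - y\<bar>)
                    \<and> (\<forall>x\<in>{0..1}. f x \<in> {-1..1})}"

end

theory Submission
  imports Defs
begin

lemma sign_seqs_0: "sign_seqs 0 = {[]}"
  by (auto simp: sign_seqs_def)

lemma sign_seqs_Suc:
  "sign_seqs (Suc T) = (\<lambda>(s,x). s @ [x]) ` (sign_seqs T \<times> {-1,1})"
proof (rule set_eqI, rule iffI)
  fix s assume s: "s \<in> sign_seqs (Suc T)"
  then have "s \<noteq> []" by (auto simp: sign_seqs_def)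
  then obtain u x where "s = u @ [x]" by (metis rev_exhaust)
  with s show "s \<in> (\<lambda>(s,x). s @ [x]) ` (sign_seqs T \<times> {-1,1})"
    by (auto simp: sign_seqs_def image_iff)
qed (auto simp: sign_seqs_def)

lemma finite_sign_seqs: "finite (sign_seqs T)"
proof -
  have "sign_seqs T = {xs. set xs \<subseteq> {-1,1} \<and> length xs = T}"
    by (auto simp: sign_seqs_def)
  then show ?thesis using finite_lists_length_eq[of "{-1,1::real}" T] by simp
qed

lemma sum_sign_seqs_Suc:
  fixes h :: "real list \<Rightarrow> 'b::comm_monoid_add"
  shows "sum h (sign_seqs (Suc T)) = (\<Sum>s\<in>sign_seqs T. h (s @ [1]) + h (s @ [-1]))"
proof -
  have inj: "inj_on (\<lambda>(s,x). s @ [x]) (sign_seqs T \<times> {-1,1::real})"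
    by (auto simp: inj_on_def)
  have "sum h (sign_seqs (Suc T)) = (\<Sum>p\<in>sign_seqs T \<times> {-1,1}. h ((\<lambda>(s,x). s @ [x]) p))"
    unfolding sign_seqs_Suc by (rule sum.reindex[OF inj, unfolded comp_def])
  also have "\<dots> = (\<Sum>s\<in>sign_seqs T. \<Sum>x\<in>{-1,1}. h (s @ [x]))"
    by (subst sum.cartesian_product) (simp add: case_prod_unfold)
  also have "\<dots> = (\<Sum>s\<in>sign_seqs T. h (s @ [1]) + h (s @ [-1]))"
    by (simp add: add.commute)
  finally show ?thesis .
qed

lemma card_sign_seqs: "(\<Sum>s\<in>sign_seqs T. (1::real)) = 2 ^ T"
proof (induction T)
  case 0 then show ?case by (simp add: sign_seqs_0)
next
  case (Suc T)
  have "(\<Sum>s\<in>sign_seqs (Suc T). (1::real)) = (\<Sum>s\<in>sign_seqs T. 1 + 1)"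
    by (rule sum_sign_seqs_Suc)
  also have "\<dots> = 2 * (\<Sum>s\<in>sign_seqs T. (1::real))"
    by (simp only: sum.distrib mult_2)
  finally show ?case using Suc by simp
qed

lemma sign_nth_abs: "s \<in> sign_seqs T \<Longrightarrow> t < T \<Longrightarrow> \<bar>s ! t\<bar> = 1"
proof -
  assume a: "s \<in> sign_seqs T" "t < T"
  then have "s ! t \<in> set s" by (auto simp: sign_seqs_def)
  then have "s ! t \<in> {-1,1}" using a unfolding sign_seqs_def by blast
  then show ?thesis by auto
qed

lemma orth:
  fixes a :: "nat \<Rightarrow> real list \<Rightarrow> real"
  shows "(\<Sum>s\<in>sign_seqs T. (\<Sum>t<T. s ! t * a t (take t s))\<^sup>2)
       = (\<Sum>s\<in>sign_seqs T. \<Sum>t<T. (a t (take t s))\<^sup>2)"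
proof (induction T)
  case 0
  then show ?case by (simp add: sign_seqs_0)
next
  case (Suc T)
  have phi: "(\<Sum>t<Suc T. (s @ [x]) ! t * a t (take t (s @ [x])))
      = (\<Sum>t<T. s ! t * a t (take t s)) + x * a T s" if "s \<in> sign_seqs T" for s x
  proof -
    have l: "length s = T" using that by (simp add: sign_seqs_def)
    have "(\<Sum>t<T. (s @ [x]) ! t * a t (take t (s @ [x]))) = (\<Sum>t<T. s ! t * a t (take t s))"
      by (rule sum.cong) (auto simp: l nth_append)
    moreover have "(s @ [x]) ! T = x" using l by auto
    moreover have "take T (s @ [x]) = s" using l by auto
    ultimately show ?thesis by simp
  qed
  have r: "(\<Sum>t<Suc T. (a t (take t (s @ [x])))\<^sup>2)
      = (\<Sum>t<T. (a t (take t s))\<^sup>2) + (a T s)\<^sup>2" if "s \<in> sign_seqs T" for s x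
  proof -
    have l: "length s = T" using that by (simp add: sign_seqs_def)
    have "(\<Sum>t<T. (a t (take t (s @ [x])))\<^sup>2) = (\<Sum>t<T. (a t (take t s))\<^sup>2)"
      by (rule sum.cong) (auto simp: l)
    then show ?thesis using l by simp
  qed
  have "(\<Sum>s\<in>sign_seqs (Suc T). (\<Sum>t<Suc T. s ! t * a t (take t s))\<^sup>2)
     = (\<Sum>s\<in>sign_seqs T. 2 * (\<Sum>t<T. s ! t * a t (take t s))\<^sup>2 + 2 * (a T s)\<^sup>2)"
    unfolding sum_sign_seqs_Suc
  proof (rule sum.cong)
    fix s assume s: "s \<in> sign_seqs T"
    have sq: "(u + 1 * v)\<^sup>2 + (u + (-1) * v)\<^sup>2 = 2 * u\<^sup>2 + 2 * v\<^sup>2" for u v :: real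
      by (simp add: power2_eq_square algebra_simps)
    show "(\<Sum>t<Suc T. (s @ [1]) ! t * a t (take t (s @ [1])))\<^sup>2 +
          (\<Sum>t<Suc T. (s @ [- 1]) ! t * a t (take t (s @ [- 1])))\<^sup>2 =
          2 * (\<Sum>t<T. s ! t * a t (take t s))\<^sup>2 + 2 * (a T s)\<^sup>2"
      by (simp only: phi[OF s] sq)
  qed simp
  also have "\<dots> = 2 * (\<Sum>s\<in>sign_seqs T. (\<Sum>t<T. s ! t * a t (take t s))\<^sup>2) + 2 * (\<Sum>s\<in>sign_seqs T. (a T s)\<^sup>2)"
    by (simp add: sum.distrib sum_distrib_left)
  also have "\<dots> = (\<Sum>s\<in>sign_seqs T. 2 * (\<Sum>t<T. (a t (take t s))\<^sup>2) + 2 * (a T s)\<^sup>2)"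
    by (simp add: Suc sum.distrib sum_distrib_left)
  also have "\<dots> = (\<Sum>s\<in>sign_seqs (Suc T). \<Sum>t<Suc T. (a t (take t s))\<^sup>2)"
    unfolding sum_sign_seqs_Suc
  proof (rule sum.cong)
    fix s assume s: "s \<in> sign_seqs T"
    show "2 * (\<Sum>t<T. (a t (take t s))\<^sup>2) + 2 * (a T s)\<^sup>2 =
       (\<Sum>t<Suc T. (a t (take t (s @ [1])))\<^sup>2) + (\<Sum>t<Suc T. (a t (take t (s @ [-1])))\<^sup>2)"
      unfolding r[OF s] by simp
  qed simp
  finally show ?case .
qed

definition Sj :: "(nat \<Rightarrow> real list \<Rightarrow> 'j) \<Rightarrow> nat \<Rightarrow> 'j \<Rightarrow> real list \<Rightarrow> real" where
  "Sj c T j s = (\<Sum>t<T. s ! t * (if c t (take t s) = j then 1 else 0))"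

lemma lemC:
  fixes c :: "nat \<Rightarrow> real list \<Rightarrow> 'j"
  assumes J: "finite J" and cJ: "\<And>t p. c t p \<in> J"
  shows "(\<Sum>s\<in>sign_seqs T. \<Sum>j\<in>J. \<bar>Sj c T j s\<bar>) \<le> 2 ^ T * sqrt (real (card J) * real T)"
proof -
  let ?X = "\<lambda>p. \<bar>Sj c T (snd p) (fst p)\<bar>"
  let ?P = "sign_seqs T \<times> J"
  have cardS: "real (card (sign_seqs T)) = 2 ^ T" using card_sign_seqs[of T] by simp
  have e1: "(\<Sum>s\<in>sign_seqs T. \<Sum>j\<in>J. \<bar>Sj c T j s\<bar>) = sum ?X ?P"
    by (subst sum.cartesian_product) (simp add: case_prod_unfold)
  have cs: "(sum ?X ?P)\<^sup>2 \<le> (\<Sum>p\<in>?P. (?X p)\<^sup>2) * card ?P"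
    by (rule sum_squared_le_sum_of_squares)
  have ind2: "(if P then 1 else 0 :: real)\<^sup>2 = (if P then 1 else 0)" for P by simp
  have "(\<Sum>p\<in>?P. (?X p)\<^sup>2) = (\<Sum>j\<in>J. \<Sum>s\<in>sign_seqs T. (Sj c T j s)\<^sup>2)"
  proof -
    have "(\<Sum>p\<in>?P. (?X p)\<^sup>2) = (\<Sum>s\<in>sign_seqs T. \<Sum>j\<in>J. (Sj c T j s)\<^sup>2)"
      by (subst sum.cartesian_product) (simp add: case_prod_unfold)
    then show ?thesis by (simp only: sum.swap[of _ "sign_seqs T"])
  qed
  also have "\<dots> = (\<Sum>j\<in>J. \<Sum>s\<in>sign_seqs T. \<Sum>t<T. (if c t (take t s) = j then 1 else 0))"
  proof (rule sum.cong[OF refl])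
    fix j assume "j \<in> J"
    show "(\<Sum>s\<in>sign_seqs T. (Sj c T j s)\<^sup>2) = (\<Sum>s\<in>sign_seqs T. \<Sum>t<T. (if c t (take t s) = j then 1 else 0))"
      using orth[of "\<lambda>t p. if c t p = j then 1 else (0::real)" T] unfolding Sj_def ind2 .
  qed
  also have "\<dots> = (\<Sum>s\<in>sign_seqs T. \<Sum>t<T. \<Sum>j\<in>J. (if c t (take t s) = j then 1 else 0))"
    by (simp only: sum.swap[of _ J])
  also have "\<dots> = (\<Sum>s\<in>sign_seqs T. \<Sum>t<T. 1)"
    using J cJ by simp
  also have "\<dots> = 2 ^ T * real T" using cardS by simp
  finally have sq: "(\<Sum>p\<in>?P. (?X p)\<^sup>2) = 2 ^ T * real T" .
  have cP: "real (card ?P) = 2 ^ T * real (card J)"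
    using cardS by (simp add: card_cartesian_product)
  have "(sum ?X ?P)\<^sup>2 \<le> (2 ^ T)\<^sup>2 * (real (card J) * real T)"
    using cs unfolding sq cP by (simp add: power2_eq_square algebra_simps)
  then have "sum ?X ?P \<le> sqrt ((2 ^ T)\<^sup>2 * (real (card J) * real T))"
    by (rule real_le_rsqrt)
  also have "\<dots> = 2 ^ T * sqrt (real (card J) * real T)"
    by (simp add: real_sqrt_mult)
  finally show ?thesis using e1 by simp
qed

lemma lemCp:
  fixes c :: "nat \<Rightarrow> real list \<Rightarrow> 'j" and D :: "'j \<Rightarrow> real"
  assumes J: "finite J" and cJ: "\<And>t p. c t p \<in> J" and DB: "\<And>j. j \<in> J \<Longrightarrow> \<bar>D j\<bar> \<le> B"
  shows "(\<Sum>t<T. s ! t * D (c t (take t s))) \<le> B * (\<Sum>j\<in>J. \<bar>Sj c T j s\<bar>)"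
proof -
  have dc: "s ! t * D (c t p) = (\<Sum>j\<in>J. D j * (s ! t * (if c t p = j then 1 else 0)))" for t p
  proof -
    have "(\<Sum>j\<in>J. D j * (s ! t * (if c t p = j then 1 else 0))) = (\<Sum>j\<in>J. if c t p = j then D j * s ! t else 0)"
      by (rule sum.cong) auto
    also have "\<dots> = D (c t p) * s ! t" using J cJ[of t p] by simp
    finally show ?thesis by simp
  qed
  have "(\<Sum>t<T. s ! t * D (c t (take t s)))
      = (\<Sum>t<T. \<Sum>j\<in>J. D j * (s ! t * (if c t (take t s) = j then 1 else 0)))"
    by (simp only: dc)
  also have "\<dots> = (\<Sum>j\<in>J. D j * Sj c T j s)"
    unfolding Sj_def by (simp only: sum.swap[of _ "{..<T}"] sum_distrib_left)
  also have "\<dots> \<le> (\<Sum>j\<in>J. B * \<bar>Sj c T j s\<bar>)"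
  proof (rule sum_mono)
    fix j assume j: "j \<in> J"
    have "D j * Sj c T j s \<le> \<bar>D j\<bar> * \<bar>Sj c T j s\<bar>"
      by (metis abs_ge_self abs_mult)
    also have "\<dots> \<le> B * \<bar>Sj c T j s\<bar>"
      by (rule mult_right_mono[OF DB[OF j]]) simp
    finally show "D j * Sj c T j s \<le> B * \<bar>Sj c T j s\<bar>" .
  qed
  finally show ?thesis by (simp add: sum_distrib_left)
qed

definition gg :: "nat \<Rightarrow> real \<Rightarrow> real" where
  "gg k x = of_int \<lfloor>4 ^ k * x\<rfloor> / 4 ^ k"

definition cell :: "nat \<Rightarrow> real \<Rightarrow> nat" where
  "cell k x = nat \<lfloor>4 ^ k * x\<rfloor>"

lemma floor_nonneg_mult: "0 \<le> x \<Longrightarrow> 0 \<le> \<lfloor>(4::real) ^ k * x\<rfloor>"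
  by simp

lemma gg_cell: "0 \<le> x \<Longrightarrow> real (cell k x) / 4 ^ k = gg k x"
  unfolding gg_def cell_def by simp

lemma gg_bounds:
  assumes "0 \<le> x"
  shows "0 \<le> gg k x" "gg k x \<le> x" "x - gg k x \<le> 1 / 4 ^ k"
proof -
  have q: "(0::real) < 4 ^ k" by simp
  show "0 \<le> gg k x" unfolding gg_def using assms by simp
  have "of_int \<lfloor>4 ^ k * x\<rfloor> \<le> 4 ^ k * x" by (rule of_int_floor_le)
  then show "gg k x \<le> x" unfolding gg_def using q by (simp add: divide_le_eq mult.commute)
  have "4 ^ k * x < of_int \<lfloor>4 ^ k * x\<rfloor> + 1" by (rule real_of_int_floor_add_one_gt)
  then have "x < gg k x + 1 / 4 ^ k" unfolding gg_def using q
    by (simp add: field_simps)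
  then show "x - gg k x \<le> 1 / 4 ^ k" by simp
qed

lemma gg_mono: "gg k x \<le> gg (Suc k) x"
proof -
  have "of_int (4 * \<lfloor>4 ^ k * x\<rfloor>) \<le> (4::real) * (4 ^ k * x)"
    using of_int_floor_le[of "4 ^ k * x"] by simp
  then have "4 * \<lfloor>4 ^ k * x\<rfloor> \<le> \<lfloor>4 * (4 ^ k * x)\<rfloor>"
    by (simp add: le_floor_iff)
  then have "(4::real) * of_int \<lfloor>4 ^ k * x\<rfloor> \<le> of_int \<lfloor>4 ^ Suc k * x\<rfloor>"
    by (simp add: mult.assoc)
  then show ?thesis unfolding gg_def by (simp add: field_simps)
qed

lemma gg_step: "0 \<le> x \<Longrightarrow> \<bar>gg (Suc k) x - gg k x\<bar> \<le> 1 / 4 ^ k"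
  using gg_mono[of k x] gg_bounds[of x k] gg_bounds[of x "Suc k"] by simp

lemma cell_le: "x \<le> 1 \<Longrightarrow> cell k x \<le> 4 ^ k"
proof -
  assume "x \<le> 1"
  then have "(4::real) ^ k * x \<le> 4 ^ k" by simp
  then have "\<lfloor>(4::real) ^ k * x\<rfloor> \<le> 4 ^ k"
    by (metis floor_mono floor_of_int of_int_numeral of_int_power)
  then show ?thesis unfolding cell_def by (simp add: nat_le_iff)
qed

lemma cell_div: "0 \<le> x \<Longrightarrow> cell (Suc k) x div 4 = cell k x"
proof -
  assume x: "0 \<le> x"
  have "\<lfloor>(4::real) ^ k * x\<rfloor> = \<lfloor>(4 * (4 ^ k * x)) / real_of_int 4\<rfloor>" by simp
  also have "\<dots> = \<lfloor>4 * (4 ^ k * x)\<rfloor> div 4" by (rule floor_divide_real_eq_div) simp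
  finally have e: "\<lfloor>(4::real) ^ k * x\<rfloor> = \<lfloor>(4::real) ^ Suc k * x\<rfloor> div 4" by (simp add: mult.assoc)
  have "0 \<le> \<lfloor>(4::real) ^ Suc k * x\<rfloor>" using x by simp
  then show ?thesis unfolding cell_def e by (simp add: nat_div_distrib)
qed

definition LL :: "(real \<Rightarrow> real) \<Rightarrow> nat \<Rightarrow> real \<Rightarrow> real" where
  "LL f k x = (if k = 0 then f (gg 0 x) else f (gg k x) - f (gg (k - 1) x))"

definition DD :: "(real \<Rightarrow> real) \<Rightarrow> nat \<Rightarrow> nat \<Rightarrow> real" where
  "DD f k j = (if k = 0 then f (real j) else f (real j / 4 ^ k) - f (real (j div 4) / 4 ^ (k - 1)))"

definition DC :: "(real \<Rightarrow> real) \<Rightarrow> nat \<Rightarrow> nat \<Rightarrow> real" where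
  "DC f k j = (if \<bar>DD f k j\<bar> \<le> 4 / 4 ^ k then DD f k j else 0)"

lemma sum_LL: "(\<Sum>k\<le>K. LL f k x) = f (gg K x)"
  by (induction K) (simp_all add: LL_def)

lemma DC_bound: "\<bar>DC f k j\<bar> \<le> 4 / 4 ^ k"
  unfolding DC_def by auto

lemma lip_D: "f \<in> lip1_family \<Longrightarrow> x \<in> {0..1} \<Longrightarrow> y \<in> {0..1} \<Longrightarrow> \<bar>f x - f y\<bar> \<le> \<bar>x - y\<bar>"
  unfolding lip1_family_def by blast

lemma lip_B: "f \<in> lip1_family \<Longrightarrow> x \<in> {0..1} \<Longrightarrow> \<bar>f x\<bar> \<le> 1"
proof -
  assume "f \<in> lip1_family" "x \<in> {0..1}"
  then have "f x \<in> {-1..1}" unfolding lip1_family_def by blast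
  then show ?thesis by (simp add: abs_le_iff)
qed

lemma gg_in: "x \<in> {0..1} \<Longrightarrow> gg k x \<in> {0..1}"
  using gg_bounds[of x k] by auto

lemma LL_DC:
  assumes f: "f \<in> lip1_family" and x: "x \<in> {0..1}"
  shows "LL f k x = DC f k (cell k x)"
proof -
  have x0: "0 \<le> x" using x by simp
  have eq: "DD f k (cell k x) = LL f k x"
  proof (cases k)
    case 0
    then show ?thesis using gg_cell[OF x0, of 0] by (simp add: DD_def LL_def)
  next
    case (Suc m)
    then show ?thesis using gg_cell[OF x0, of "Suc m"] gg_cell[OF x0, of m] cell_div[OF x0, of m]
      by (simp add: DD_def LL_def)
  qed
  have bd: "\<bar>LL f k x\<bar> \<le> 4 / 4 ^ k"
  proof (cases k)
    case 0
    then show ?thesis using lip_B[OF f gg_in[OF x, of 0]] by (simp add: LL_def)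
  next
    case (Suc m)
    have "\<bar>LL f k x\<bar> \<le> \<bar>gg (Suc m) x - gg m x\<bar>"
      using lip_D[OF f gg_in[OF x] gg_in[OF x]] Suc by (simp add: LL_def)
    also have "\<dots> \<le> 1 / 4 ^ m" by (rule gg_step[OF x0])
    also have "\<dots> = 4 / 4 ^ k" using Suc by simp
    finally show ?thesis .
  qed
  show ?thesis using eq bd unfolding DC_def by simp
qed

lemma pointwise:
  assumes f: "f \<in> lip1_family" and z: "z \<in> unit_trees" and s: "s \<in> sign_seqs T"
  shows "(\<Sum>t<T. s ! t * f (z t (take t s)))
     \<le> (\<Sum>k\<le>K. (4 / 4 ^ k) * (\<Sum>j\<in>{0..4 ^ k}. \<bar>Sj (\<lambda>t p. cell k (z t p)) T j s\<bar>)) + real T / 4 ^ K"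
proof -
  have zin: "z t p \<in> {0..1}" for t p using z unfolding unit_trees_def by blast
  have dec: "f (z t p) = (\<Sum>k\<le>K. DC f k (cell k (z t p))) + (f (z t p) - f (gg K (z t p)))" for t p
    using sum_LL[where K=K and f=f and x="z t p"] LL_DC[OF f zin[of t p]] by simp
  have "(\<Sum>t<T. s ! t * f (z t (take t s)))
     = (\<Sum>k\<le>K. \<Sum>t<T. s ! t * DC f k (cell k (z t (take t s))))
       + (\<Sum>t<T. s ! t * (f (z t (take t s)) - f (gg K (z t (take t s)))))"
  proof -
    have "(\<Sum>t<T. s ! t * f (z t (take t s)))
      = (\<Sum>t<T. (\<Sum>k\<le>K. s ! t * DC f k (cell k (z t (take t s))))
         + s ! t * (f (z t (take t s)) - f (gg K (z t (take t s)))))"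
    proof (rule sum.cong[OF refl])
      fix t
      show "s ! t * f (z t (take t s)) = (\<Sum>k\<le>K. s ! t * DC f k (cell k (z t (take t s))))
         + s ! t * (f (z t (take t s)) - f (gg K (z t (take t s))))"
        by (subst dec[of t "take t s"]) (simp only: distrib_left sum_distrib_left)
    qed
    then show ?thesis by (simp only: sum.distrib sum.swap[of _ "{..<T}"])
  qed
  also have "\<dots> \<le> (\<Sum>k\<le>K. (4 / 4 ^ k) * (\<Sum>j\<in>{0..4 ^ k}. \<bar>Sj (\<lambda>t p. cell k (z t p)) T j s\<bar>)) + real T / 4 ^ K"
  proof (rule add_mono)
    show "(\<Sum>k\<le>K. \<Sum>t<T. s ! t * DC f k (cell k (z t (take t s))))
       \<le> (\<Sum>k\<le>K. (4 / 4 ^ k) * (\<Sum>j\<in>{0..4 ^ k}. \<bar>Sj (\<lambda>t p. cell k (z t p)) T j s\<bar>))"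
    proof (rule sum_mono)
      fix k assume "k \<in> {..K}"
      show "(\<Sum>t<T. s ! t * DC f k (cell k (z t (take t s))))
       \<le> (4 / 4 ^ k) * (\<Sum>j\<in>{0..4 ^ k}. \<bar>Sj (\<lambda>t p. cell k (z t p)) T j s\<bar>)"
        using lemCp[where J="{0..4 ^ k}" and c="\<lambda>t p. cell k (z t p)" and D="DC f k" and B="4 / 4 ^ k" and T=T and s=s]
          cell_le zin DC_bound by auto
    qed
  next
    have "(\<Sum>t<T. s ! t * (f (z t (take t s)) - f (gg K (z t (take t s)))))
        \<le> (\<Sum>t<T. 1 / 4 ^ K)"
    proof (rule sum_mono)
      fix t assume t: "t \<in> {..<T}"
      let ?x = "z t (take t s)"
      have "s ! t * (f ?x - f (gg K ?x)) \<le> \<bar>s ! t\<bar> * \<bar>f ?x - f (gg K ?x)\<bar>"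
        by (metis abs_ge_self abs_mult)
      also have "\<dots> = \<bar>f ?x - f (gg K ?x)\<bar>" using sign_nth_abs[OF s] t by simp
      also have "\<dots> \<le> \<bar>?x - gg K ?x\<bar>" by (rule lip_D[OF f zin gg_in[OF zin]])
      also have "\<dots> \<le> 1 / 4 ^ K" using gg_bounds[of ?x K] zin[of t "take t s"] by simp
      finally show "s ! t * (f ?x - f (gg K ?x)) \<le> 1 / 4 ^ K" .
    qed
    then show "(\<Sum>t<T. s ! t * (f (z t (take t s)) - f (gg K (z t (take t s))))) \<le> real T / 4 ^ K"
      by simp
  qed
  finally show ?thesis .
qed

lemma geom_eq: "(\<Sum>k\<le>K. (1/2::real) ^ k) = 2 - (1/2) ^ K"
  by (induction K) simp_all

lemma geom: "(\<Sum>k\<le>K. (1/2::real) ^ k) \<le> 2"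
  unfolding geom_eq by simp

lemma level_ineq: "(4 / 4 ^ k) * sqrt ((real (4 ^ k) + 1) * x) \<le> 8 * (1/2) ^ k * sqrt x" if x: "0 \<le> x"
proof -
  have p: "(4::real) ^ k = 2 ^ k * 2 ^ k" by (simp flip: power_mult_distrib)
  have "sqrt ((real (4 ^ k) + 1) * x) \<le> sqrt ((2 * 2 ^ k)\<^sup>2 * x)"
  proof (rule real_sqrt_le_mono, rule mult_right_mono[OF _ x])
    have "(1::real) \<le> 4 ^ k" by simp
    then show "real (4 ^ k) + 1 \<le> (2 * 2 ^ k)\<^sup>2" by (simp add: power2_eq_square p)
  qed
  also have "\<dots> = 2 * 2 ^ k * sqrt x" by (simp add: real_sqrt_mult)
  finally have a: "sqrt ((real (4 ^ k) + 1) * x) \<le> 2 * 2 ^ k * sqrt x" .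
  have "(4 / 4 ^ k) * sqrt ((real (4 ^ k) + 1) * x) \<le> (4 / 4 ^ k) * (2 * 2 ^ k * sqrt x)"
    by (rule mult_left_mono[OF a]) simp
  also have "\<dots> = 8 * (1/2) ^ k * sqrt x" by (simp add: p field_simps)
  finally show ?thesis .
qed

lemma expect_bound:
  assumes z: "z \<in> unit_trees"
  shows "(\<Sum>s\<in>sign_seqs T. (\<Sum>k\<le>K. (4 / 4 ^ k) * (\<Sum>j\<in>{0..4 ^ k}. \<bar>Sj (\<lambda>t p. cell k (z t p)) T j s\<bar>)) + real T / 4 ^ K)
     \<le> 2 ^ T * (16 * sqrt (real T)) + 2 ^ T * (real T / 4 ^ K)"
proof -
  have zin: "z t p \<in> {0..1}" for t p using z unfolding unit_trees_def by blast
  let ?A = "\<lambda>k s. (\<Sum>j\<in>{0..4 ^ k}. \<bar>Sj (\<lambda>t p. cell k (z t p)) T j s\<bar>)"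
  have "(\<Sum>s\<in>sign_seqs T. (\<Sum>k\<le>K. (4 / 4 ^ k) * ?A k s) + real T / 4 ^ K)
      = (\<Sum>k\<le>K. (4 / 4 ^ k) * (\<Sum>s\<in>sign_seqs T. ?A k s)) + 2 ^ T * (real T / 4 ^ K)"
    using card_sign_seqs[of T]
    by (simp add: sum.distrib sum_distrib_left sum.swap[of _ "sign_seqs T"] flip: sum_distrib_right)
  also have "\<dots> \<le> (\<Sum>k\<le>K. 2 ^ T * (8 * (1/2) ^ k * sqrt (real T))) + 2 ^ T * (real T / 4 ^ K)"
  proof (rule add_right_mono, rule sum_mono)
    fix k assume "k \<in> {..K}"
    have c: "(\<Sum>s\<in>sign_seqs T. ?A k s) \<le> 2 ^ T * sqrt (real (card {0..(4::nat) ^ k}) * real T)"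
      by (rule lemC) (use cell_le zin in auto)
    have "(4 / 4 ^ k) * (\<Sum>s\<in>sign_seqs T. ?A k s) \<le> (4 / 4 ^ k) * (2 ^ T * sqrt ((real (4 ^ k) + 1) * real T))"
      by (rule mult_left_mono) (use c in \<open>simp_all add: add.commute\<close>)
    also have "\<dots> = 2 ^ T * ((4 / 4 ^ k) * sqrt ((real (4 ^ k) + 1) * real T))" by simp
    also have "\<dots> \<le> 2 ^ T * (8 * (1/2) ^ k * sqrt (real T))"
      by (rule mult_left_mono[OF level_ineq]) simp_all
    finally show "(4 / 4 ^ k) * (\<Sum>s\<in>sign_seqs T. ?A k s) \<le> 2 ^ T * (8 * (1/2) ^ k * sqrt (real T))" .
  qed
  also have "(\<Sum>k\<le>K. 2 ^ T * (8 * (1/2) ^ k * sqrt (real T))) = 2 ^ T * (8 * sqrt (real T)) * (\<Sum>k\<le>K. (1/2::real) ^ k)"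
    by (simp add: sum_distrib_left ac_simps)
  also have "\<dots> \<le> 2 ^ T * (8 * sqrt (real T)) * 2"
    by (rule mult_left_mono[OF geom]) simp
  finally show ?thesis by simp
qed

theorem lemma5:
  shows "\<exists>C::real. \<forall>T::nat. T > 0 \<longrightarrow> seq_rademacher lip1_family T \<le> C * sqrt (real T)"
proof (intro exI allI impI)
  fix T :: nat assume T: "T > 0"
  have ne1: "lip1_family \<noteq> {}"
  proof -
    have "(\<lambda>_. 0) \<in> lip1_family" unfolding lip1_family_def by simp
    then show ?thesis by blast
  qed
  have ne2: "unit_trees \<noteq> {}"
  proof -
    have "(\<lambda>_ _. 0) \<in> unit_trees" unfolding unit_trees_def by simp
    then show ?thesis by blast
  qed
  have T4: "real T / 4 ^ T \<le> sqrt (real T)"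
  proof -
    have "real T < 2 ^ T" by (metis of_nat_less_numeral_power_cancel_iff less_exp)
    also have "(2::real) ^ T \<le> 4 ^ T" by (rule power_mono) simp_all
    finally have "real T / 4 ^ T \<le> 1" by simp
    also have "1 \<le> sqrt (real T)" using T by simp
    finally show ?thesis .
  qed
  show "seq_rademacher lip1_family T \<le> 17 * sqrt (real T)"
    unfolding seq_rademacher_def
  proof (rule cSUP_least[OF ne2])
    fix z assume z: "z \<in> unit_trees"
    let ?W = "\<lambda>s. (\<Sum>k\<le>T. (4 / 4 ^ k) * (\<Sum>j\<in>{0..4 ^ k}. \<bar>Sj (\<lambda>t p. cell k (z t p)) T j s\<bar>)) + real T / 4 ^ T"
    have "(\<Sum>\<sigma>\<in>sign_seqs T. (SUP f\<in>lip1_family. \<Sum>t<T. \<sigma> ! t * f (z t (take t \<sigma>)))) \<le> (\<Sum>s\<in>sign_seqs T. ?W s)"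
    proof (rule sum_mono)
      fix s assume s: "s \<in> sign_seqs T"
      show "(SUP f\<in>lip1_family. \<Sum>t<T. s ! t * f (z t (take t s))) \<le> ?W s"
        by (rule cSUP_least[OF ne1]) (rule pointwise[OF _ z s])
    qed
    also have "\<dots> \<le> 2 ^ T * (16 * sqrt (real T)) + 2 ^ T * (real T / 4 ^ T)"
      by (rule expect_bound[OF z])
    also have "\<dots> \<le> 2 ^ T * (17 * sqrt (real T))"
    proof -
      have h: "2 ^ T * (real T / 4 ^ T) \<le> 2 ^ T * sqrt (real T)"
        by (rule mult_left_mono[OF T4]) simp
      have e1: "(2::real) ^ T * (16 * sqrt (real T)) = 16 * (2 ^ T * sqrt (real T))" by simp
      have e2: "(2::real) ^ T * (17 * sqrt (real T)) = 17 * (2 ^ T * sqrt (real T))" by simp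
      show ?thesis unfolding e1 e2 using h by linarith
    qed
    finally show "(\<Sum>\<sigma>\<in>sign_seqs T. (SUP f\<in>lip1_family. \<Sum>t<T. \<sigma> ! t * f (z t (take t \<sigma>)))) / 2 ^ T \<le> 17 * sqrt (real T)"
      by (simp add: divide_le_eq mult.commute)
  qed
qed

end
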